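(* Let $\mathcal I$ index a finite set of strategies for the iterated Prisoner's Dilemma (payoffs normalized with $T=1$, $S=0$), and assume $P<\tfrac12$. Suppose the strategy indexed by $i^*$ is an extortionate strategy $\mathbf p^{i^*}$ (a firm non-exceptional zero-determinant strategy with $\bar\alpha>0$) together with initial defection. If for no other $j\in\mathcal I$ is $\mathbf p^j$ firm, then $i^*$ is an evolutionarily unstable strategy for the game $\{A_{ij}\}$, and the vertex $v(i^* )$ is a repellor of the replicator dynamics: there is $\epsilon>0$ such that $1>\pi_{i^*}\ge1-\epsilon$ implies $\frac{d\pi_{i^*}}{dt}<0$.
   Context: Iterated Prisoner's Dilemma with normalized payoffs $T=1>R>P>S=0$, $2R>1$; outcomes ordered $cc,cd,dc,dd$ (own play first); payoff vectors $\mathbf S_X=(R,0,1,P)$, $\mathbf S_Y=(R,1,0,P)$, $\mathbf 1=(1,1,1,1)$, $\mathbf e_{23}=(0,1,1,0)$. A memory-one strategy vector is $\mathbf p\in[0,1]^4$, $p_i$ being the probability of playing $c$ after the $i$-th outcome, outcomes labeled from the player's own perspective; it is firm if $p_4=0$. A strategy is such a vector together with an initial play. The X Press-Dyson vector $\mathbf p-(1,1,0,0)$ decomposes uniquely as $\alpha\mathbf S_X+\beta\mathbf S_Y+\gamma\mathbf 1+\delta\mathbf e_{23}$; $\mathbf p$ is a non-exceptional zero-determinant strategy if $\delta=0$ and $\gamma>0$, and then $\bar\alpha=\alpha/\gamma$. For $i,j\in\mathcal I$, $A_{ij}$ is the long-run (Cesàro-limit) average payoff of X when X uses strategy $i$ and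 Y uses strategy $j$. Replicator dynamics on the simplex $\Delta\subset\mathbb R^{\mathcal I}$: $\frac{d\pi_i}{dt}=\pi_i(A_{i\pi}-A_{\pi\pi})$, $A_{i\pi}=\sum_j\pi_jA_{ij}$, $A_{\pi\pi}=\sum_i\pi_iA_{i\pi}$; $v(i)$ is the vertex $\pi_i=1$. $i^*$ is an evolutionarily unstable strategy (EUS) if $A_{ji^*}>A_{i^*i^*}$ for all $j\ne i^*$. *)

theory Defs
  imports Complex_Main
begin

text \<open>Outcomes of one round, labelled from the focal player's perspective
  (own play first): cc, cd, dc, dd.  A play is a bool, True = cooperate.\<close>

datatype outcome = CC | CD | DC | DD

definition osum :: "(outcome \<Rightarrow> real) \<Rightarrow> real" where
  "osum f = f CC + f CD + f DC + f DD"

definition mk_outcome :: "bool \<Rightarrow> bool \<Rightarrow> outcome" where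
  "mk_outcome x y = (if x then (if y then CC else CD) else (if y then DC else DD))"

fun own_play :: "outcome \<Rightarrow> bool" where
  "own_play CC = True" | "own_play CD = True" | "own_play DC = False" | "own_play DD = False"

fun other_play :: "outcome \<Rightarrow> bool" where
  "other_play CC = True" | "other_play CD = False" | "other_play DC = True" | "other_play DD = False"

fun swap_outcome :: "outcome \<Rightarrow> outcome" where
  "swap_outcome CC = CC" | "swap_outcome CD = DC" | "swap_outcome DC = CD" | "swap_outcome DD = DD"

fun SX :: "real \<Rightarrow> real \<Rightarrow> outcome \<Rightarrow> real" where
  "SX R P CC = R" | "SX R P CD = 0" | "SX R P DC = 1" | "SX R P DD = P"

fun SY :: "real \<Rightarrow> real \<Rightarrow> outcome \<Rightarrow> real" where
  "SY R P CC = R" | "SY R P CD = 1" | "SY R P DC = 0" | "SY R P DD = P"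

fun e23 :: "outcome \<Rightarrow> real" where
  "e23 CC = 0" | "e23 CD = 1" | "e23 DC = 1" | "e23 DD = 0"

fun tilde :: "outcome \<Rightarrow> real" where
  "tilde CC = 1" | "tilde CD = 1" | "tilde DC = 0" | "tilde DD = 0"

text \<open>A memory-one strategy vector p in [0,1]^4 (p w = probability of cooperating
  after outcome w); a strategy is such a vector together with an initial play.\<close>
type_synonym strategy = "(outcome \<Rightarrow> real) \<times> bool"

definition is_mem1_vector :: "(outcome \<Rightarrow> real) \<Rightarrow> bool" where
  "is_mem1_vector p \<longleftrightarrow> (\<forall>w. 0 \<le> p w \<and> p w \<le> 1)"

definition firm :: "(outcome \<Rightarrow> real) \<Rightarrow> bool" where
  "firm p \<longleftrightarrow> p DD = 0"

text \<open>Press-Dyson decomposition p - (1,1,0,0) = \<alpha> S_X + \<beta> S_Y + \<gamma> 1 + \<delta> e_23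
  (the decomposition is unique, as the four vectors form a basis).\<close>
definition PD_decomp :: "real \<Rightarrow> real \<Rightarrow> (outcome \<Rightarrow> real)
    \<Rightarrow> real \<Rightarrow> real \<Rightarrow> real \<Rightarrow> real \<Rightarrow> bool" where
  "PD_decomp R P p \<alpha> \<beta> \<gamma> \<delta> \<longleftrightarrow>
     (\<forall>w. p w - tilde w = \<alpha> * SX R P w + \<beta> * SY R P w + \<gamma> + \<delta> * e23 w)"

text \<open>Non-exceptional zero-determinant strategy with \<delta> = 0, \<gamma> > 0; alpha-bar = alpha / gamma.\<close>
definition extortionate :: "real \<Rightarrow> real \<Rightarrow> (outcome \<Rightarrow> real) \<Rightarrow> bool" where
  "extortionate R P p \<longleftrightarrow> firm p \<and>
     (\<exists>\<alpha> \<beta> \<gamma>. PD_decomp R P p \<alpha> \<beta> \<gamma> 0 \<and> \<gamma> > 0 \<and> \<alpha> / \<gamma> > 0)"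

definition play_prob :: "real \<Rightarrow> bool \<Rightarrow> real" where
  "play_prob c b = (if b then c else 1 - c)"

definition trans :: "(outcome \<Rightarrow> real) \<Rightarrow> (outcome \<Rightarrow> real) \<Rightarrow> outcome \<Rightarrow> outcome \<Rightarrow> real" where
  "trans p q w w' = play_prob (p w) (own_play w') * play_prob (q (swap_outcome w)) (other_play w')"

fun outcome_dist :: "strategy \<Rightarrow> strategy \<Rightarrow> nat \<Rightarrow> outcome \<Rightarrow> real" where
  "outcome_dist X Y 0 w' = (if w' = mk_outcome (snd X) (snd Y) then 1 else 0)"
| "outcome_dist X Y (Suc n) w' = osum (\<lambda>w. outcome_dist X Y n w * trans (fst X) (fst Y) w w')"

definition expected_payoff :: "real \<Rightarrow> real \<Rightarrow> strategy \<Rightarrow> strategy \<Rightarrow> nat \<Rightarrow> real" where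
  "expected_payoff R P X Y n = osum (\<lambda>w. outcome_dist X Y n w * SX R P w)"

definition longrun_payoff :: "real \<Rightarrow> real \<Rightarrow> strategy \<Rightarrow> strategy \<Rightarrow> real" where
  "longrun_payoff R P X Y = lim (\<lambda>N. (\<Sum>n<N. expected_payoff R P X Y n) / real N)"

definition payA :: "real \<Rightarrow> real \<Rightarrow> ('i \<Rightarrow> strategy) \<Rightarrow> 'i \<Rightarrow> 'i \<Rightarrow> real" where
  "payA R P s i j = longrun_payoff R P (s i) (s j)"

definition simplex :: "('i::finite \<Rightarrow> real) set" where
  "simplex = {\<pi>. (\<forall>i. 0 \<le> \<pi> i) \<and> (\<Sum>i\<in>UNIV. \<pi> i) = 1}"

definition A_vs_mix :: "('i::finite \<Rightarrow> 'i \<Rightarrow> real) \<Rightarrow> 'i \<Rightarrow> ('i \<Rightarrow> real) \<Rightarrow> real" where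
  "A_vs_mix A i \<pi> = (\<Sum>j\<in>UNIV. \<pi> j * A i j)"

definition A_mix_mix :: "('i::finite \<Rightarrow> 'i \<Rightarrow> real) \<Rightarrow> ('i \<Rightarrow> real) \<Rightarrow> real" where
  "A_mix_mix A \<pi> = (\<Sum>i\<in>UNIV. \<pi> i * A_vs_mix A i \<pi>)"

definition replicator_rhs :: "('i::finite \<Rightarrow> 'i \<Rightarrow> real) \<Rightarrow> ('i \<Rightarrow> real) \<Rightarrow> 'i \<Rightarrow> real" where
  "replicator_rhs A \<pi> i = \<pi> i * (A_vs_mix A i \<pi> - A_mix_mix A \<pi>)"

definition EUS :: "('i \<Rightarrow> 'i \<Rightarrow> real) \<Rightarrow> 'i \<Rightarrow> bool" where
  "EUS A i\<^sub>0 \<longleftrightarrow> (\<forall>j. j \<noteq> i\<^sub>0 \<longrightarrow> A j i\<^sub>0 > A i\<^sub>0 i\<^sub>0)"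

end

theory Submission
  imports Defs "HOL-Analysis.Cartesian_Euclidean_Space"
begin


fun mpow :: "real^'n^'n \<Rightarrow> nat \<Rightarrow> real^'n^'n" where
  "mpow M 0 = mat 1"
| "mpow M (Suc n) = mpow M n ** M"

definition stoch :: "real^'n^'n \<Rightarrow> bool" where
  "stoch M \<longleftrightarrow> (\<forall>i j. 0 \<le> M$i$j) \<and> (\<forall>i. (\<Sum>j\<in>UNIV. M$i$j) = 1)"

definition cesaro :: "real^'n^'n \<Rightarrow> nat \<Rightarrow> real^'n^'n" where
  "cesaro M N = (1 / real N) *\<^sub>R (\<Sum>n<N. mpow M n)"

lemma stoch_mat1: "stoch (mat 1 :: real^'n^'n)"
  unfolding stoch_def mat_def by (auto simp: sum.delta)

lemma stoch_mult:
  assumes "stoch (A::real^'n^'n)" "stoch B" shows "stoch (A ** B)"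
proof -
  have "(\<Sum>j\<in>UNIV. (A ** B)$i$j) = 1" for i
  proof -
    have "(\<Sum>j\<in>UNIV. (A ** B)$i$j) = (\<Sum>j\<in>UNIV. \<Sum>k\<in>UNIV. A$i$k * B$k$j)"
      by (simp add: matrix_matrix_mult_def)
    also have "\<dots> = (\<Sum>k\<in>UNIV. A$i$k * (\<Sum>j\<in>UNIV. B$k$j))"
      by (subst sum.swap) (simp add: sum_distrib_left)
    also have "\<dots> = 1" using assms by (simp add: stoch_def)
    finally show ?thesis .
  qed
  moreover have "0 \<le> (A ** B)$i$j" for i j
    using assms by (auto simp: matrix_matrix_mult_def stoch_def intro!: sum_nonneg)
  ultimately show ?thesis by (simp add: stoch_def)
qed

lemma stoch_mpow: "stoch M \<Longrightarrow> stoch (mpow M n)"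
  by (induction n) (auto simp: stoch_mat1 stoch_mult)

lemma stoch_le1: assumes "stoch (A::real^'n^'n)" shows "A$i$j \<le> 1"
proof -
  have "A$i$j \<le> (\<Sum>j\<in>UNIV. A$i$j)"
    using assms by (intro member_le_sum) (auto simp: stoch_def)
  then show ?thesis using assms by (simp add: stoch_def)
qed

lemma mpow_comm: "mpow M n ** M = M ** mpow M n"
  by (induction n) (simp_all add: matrix_mul_assoc[symmetric])

lemma sum_mmult_right: "sum f S ** (B::real^'n^'n) = (\<Sum>n\<in>S. f n ** B)"
  by (cases "finite S", induction S rule: finite_induct)
     (simp_all add: vec_eq_iff matrix_matrix_mult_def sum.distrib distrib_right)

lemma sum_mmult_left: "(B::real^'n^'n) ** sum f S = (\<Sum>n\<in>S. B ** f n)"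
  by (cases "finite S", induction S rule: finite_induct)
     (simp_all add: vec_eq_iff matrix_matrix_mult_def sum.distrib distrib_left)

lemma tendsto_mmult_right:
  assumes "(f \<longlongrightarrow> (A::real^'n^'n)) F" shows "((\<lambda>x. f x ** B) \<longlongrightarrow> A ** B) F"
  unfolding matrix_matrix_mult_def
  by (intro vec_tendstoI) (simp, intro tendsto_intros assms)

lemma tendsto_mmult_left:
  assumes "(f \<longlongrightarrow> (A::real^'n^'n)) F" shows "((\<lambda>x. B ** f x) \<longlongrightarrow> B ** A) F"
  unfolding matrix_matrix_mult_def
  by (intro vec_tendstoI) (simp, intro tendsto_intros assms)





lemma norm_mat_bound: "norm (A::real^'n^'m) \<le> (\<Sum>i\<in>UNIV. \<Sum>j\<in>UNIV. \<bar>A$i$j\<bar>)"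
proof -
  have "norm A \<le> (\<Sum>i\<in>UNIV. norm (A$i))"
    unfolding norm_vec_def by (rule L2_set_le_sum) simp
  also have "\<dots> \<le> (\<Sum>i\<in>UNIV. \<Sum>j\<in>UNIV. \<bar>A$i$j\<bar>)"
    by (intro sum_mono norm_le_l1_cart)
  finally show ?thesis .
qed

lemma cesaro_entry: "cesaro M N $ i $ j = (\<Sum>n<N. mpow M n $ i $ j) / real N"
  by (simp add: cesaro_def)

lemma cesaro_stoch: assumes "stoch M" "N > 0" shows "stoch (cesaro M N)"
proof -
  have "(\<Sum>j\<in>UNIV. cesaro M N $ i $ j) = 1" for i
  proof -
    have "(\<Sum>j\<in>UNIV. cesaro M N $ i $ j) = (\<Sum>j\<in>UNIV. \<Sum>n<N. mpow M n $ i $ j) / real N"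
      by (simp add: cesaro_entry sum_divide_distrib[symmetric])
    also have "\<dots> = (\<Sum>n<N. \<Sum>j\<in>UNIV. mpow M n $ i $ j) / real N"
      by (subst sum.swap) simp
    also have "\<dots> = 1" using stoch_mpow[OF assms(1)] assms(2) by (simp add: stoch_def)
    finally show ?thesis .
  qed
  moreover have "0 \<le> cesaro M N $ i $ j" for i j
    using stoch_mpow[OF assms(1)] unfolding cesaro_entry stoch_def
    by (intro divide_nonneg_nonneg sum_nonneg) auto
  ultimately show ?thesis by (simp add: stoch_def)
qed

lemma cesaro_bounded: fixes M :: "real^'n^'n" assumes "stoch M" shows "bounded (range (cesaro M))"
proof -
  have "norm (cesaro M N) \<le> real (CARD('n) * CARD('n))" for N
  proof (cases "N = 0")
    case True then show ?thesis by (simp add: cesaro_def)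
  next
    case False
    then have s: "stoch (cesaro M N)" using cesaro_stoch assms by auto
    have "(\<Sum>i\<in>(UNIV::'n set). \<Sum>j\<in>(UNIV::'n set). \<bar>cesaro M N$i$j\<bar>) \<le> (\<Sum>i\<in>(UNIV::'n set). \<Sum>j\<in>(UNIV::'n set). 1)"
      using s stoch_le1[OF s] unfolding stoch_def by (intro sum_mono) auto
    then show ?thesis using norm_mat_bound[of "cesaro M N"] by simp
  qed
  then show ?thesis unfolding bounded_iff by blast
qed

lemma cesaro_drift_right: assumes "stoch M"
  shows "(\<lambda>N. cesaro M N ** M - cesaro M N) \<longlonglongrightarrow> 0"
proof -
  have eq: "cesaro M N ** M - cesaro M N = (1 / real N) *\<^sub>R (mpow M N - mat 1)" for N
  proof -
    have "cesaro M N ** M = (1 / real N) *\<^sub>R (\<Sum>n<N. mpow M n ** M)"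
      unfolding cesaro_def scalar_matrix_assoc[symmetric] sum_mmult_right ..
    moreover have "(\<Sum>n<N. mpow M n ** M) - (\<Sum>n<N. mpow M n) = mpow M N - mat 1"
      using sum_lessThan_telescope[of "mpow M" N] by (simp add: sum_subtractf)
    ultimately show ?thesis
      unfolding cesaro_def by (metis scaleR_diff_right)
  qed
  show ?thesis unfolding eq
  proof (rule vec_tendstoI, rule vec_tendstoI)
    fix i j
    have b: "\<bar>mpow M N $ i $ j - mat 1 $ i $ j\<bar> \<le> 1" for N
      using stoch_mpow[OF assms, of N] stoch_le1[OF stoch_mpow[OF assms, of N], of i j]
      by (auto simp: mat_def stoch_def)
    have "\<forall>\<^sub>F x in sequentially. norm ((mpow M x $ i $ j - mat 1 $ i $ j) / real x) \<le> 1 / real x"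
      using b by (auto simp: abs_divide divide_right_mono)
    then have "(\<lambda>x. (mpow M x $ i $ j - mat 1 $ i $ j) / real x) \<longlonglongrightarrow> 0"
      by (rule Lim_null_comparison) (rule lim_1_over_n)
    then show "(\<lambda>N. ((1 / real N) *\<^sub>R (mpow M N - mat 1)) $ i $ j) \<longlonglongrightarrow> 0 $ i $ j"
      by simp
  qed
qed

lemma cesaro_comm: "M ** cesaro M N = cesaro M N ** M"
proof -
  have "M ** cesaro M N = (1 / real N) *\<^sub>R (\<Sum>n<N. M ** mpow M n)"
    by (simp only: cesaro_def matrix_scalar_ac scalar_matrix_assoc[symmetric] sum_mmult_left scaleR_sum_right)
  also have "\<dots> = (1 / real N) *\<^sub>R (\<Sum>n<N. mpow M n ** M)"
    by (simp add: mpow_comm)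
  also have "\<dots> = cesaro M N ** M"
    unfolding cesaro_def scalar_matrix_assoc[symmetric] sum_mmult_right ..
  finally show ?thesis .
qed

lemma cesaro_drift_left: assumes "stoch M"
  shows "(\<lambda>N. M ** cesaro M N - cesaro M N) \<longlonglongrightarrow> 0"
  using cesaro_drift_right[OF assms] by (simp add: cesaro_comm)




lemma limpt_props:
  fixes M :: "real^'n^'n"
  assumes "stoch M" "strict_mono r" "(cesaro M \<circ> r) \<longlonglongrightarrow> L"
  shows "L ** M = L \<and> M ** L = L \<and> stoch L"
proof -
  have lr: "(\<lambda>n. cesaro M (r n)) \<longlonglongrightarrow> L" using assms(3) by (simp add: o_def)
  have "(\<lambda>n. cesaro M (r n) ** M - cesaro M (r n)) \<longlonglongrightarrow> 0"
    using LIMSEQ_subseq_LIMSEQ[OF cesaro_drift_right[OF assms(1)] assms(2)] by (simp add: o_def)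
  moreover have "(\<lambda>n. cesaro M (r n) ** M - cesaro M (r n)) \<longlonglongrightarrow> L ** M - L"
    by (intro tendsto_diff tendsto_mmult_right lr)
  ultimately have 1: "L ** M = L" using LIMSEQ_unique by fastforce
  have "(\<lambda>n. M ** cesaro M (r n) - cesaro M (r n)) \<longlonglongrightarrow> 0"
    using LIMSEQ_subseq_LIMSEQ[OF cesaro_drift_left[OF assms(1)] assms(2)] by (simp add: o_def)
  moreover have "(\<lambda>n. M ** cesaro M (r n) - cesaro M (r n)) \<longlonglongrightarrow> M ** L - L"
    by (intro tendsto_diff tendsto_mmult_left lr)
  ultimately have 2: "M ** L = L" using LIMSEQ_unique by fastforce
  have ev: "\<forall>n\<ge>1. stoch (cesaro M (r n))"
  proof (intro allI impI cesaro_stoch assms(1))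
    fix n :: nat assume "1 \<le> n"
    then show "0 < r n" using seq_suble[OF assms(2), of n] by linarith
  qed
  have "0 \<le> L$i$j" for i j
  proof (rule LIMSEQ_le_const)
    show "(\<lambda>n. cesaro M (r n) $ i $ j) \<longlonglongrightarrow> L $ i $ j" by (intro tendsto_vec_nth lr)
    show "\<exists>N. \<forall>n\<ge>N. 0 \<le> cesaro M (r n) $ i $ j" using ev by (auto simp: stoch_def)
  qed
  moreover have "(\<Sum>j\<in>UNIV. L$i$j) = 1" for i
  proof -
    have "(\<lambda>n. \<Sum>j\<in>UNIV. cesaro M (r n) $ i $ j) \<longlonglongrightarrow> (\<Sum>j\<in>UNIV. L$i$j)"
      by (intro tendsto_sum tendsto_vec_nth lr)
    moreover have "(\<lambda>n. \<Sum>j\<in>UNIV. cesaro M (r n) $ i $ j) \<longlonglongrightarrow> 1"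
    proof (intro tendsto_eventually)
      have "\<forall>n\<ge>1. (\<Sum>j\<in>UNIV. cesaro M (r n) $ i $ j) = 1" using ev by (simp add: stoch_def)
      then show "\<forall>\<^sub>F n in sequentially. (\<Sum>j\<in>UNIV. cesaro M (r n) $ i $ j) = 1"
        unfolding eventually_sequentially by blast
    qed
    ultimately show ?thesis using LIMSEQ_unique by blast
  qed
  ultimately show ?thesis using 1 2 by (simp add: stoch_def)
qed

lemma mpow_fix_left: fixes L :: "real^'n^'n" shows "M ** L = L \<Longrightarrow> mpow M n ** L = L"
  by (induction n) (simp_all add: matrix_mul_assoc[symmetric])

lemma mpow_fix_right: fixes L :: "real^'n^'n" shows "L ** M = L \<Longrightarrow> L ** mpow M n = L"
  by (induction n) (simp_all add: matrix_mul_assoc)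

lemma cesaro_fix_left: fixes L :: "real^'n^'n" assumes "M ** L = L" "N > 0" shows "cesaro M N ** L = L"
proof -
  have "cesaro M N ** L = (1 / real N) *\<^sub>R (\<Sum>n<N. mpow M n ** L)"
    unfolding cesaro_def scalar_matrix_assoc[symmetric] by (subst sum_mmult_right) (rule refl)
  also have "\<dots> = L" using assms by (simp add: mpow_fix_left sum_constant_scaleR del: sum_constant)
  finally show ?thesis .
qed

lemma mmult_scaleR_right: "(A::real^'n^'n) ** (c *\<^sub>R B) = c *\<^sub>R (A ** B)"
  by (simp add: matrix_scalar_ac scalar_matrix_assoc[symmetric])

lemma cesaro_fix_right: fixes L :: "real^'n^'n" assumes "L ** M = L" "N > 0" shows "L ** cesaro M N = L"
proof -
  have "L ** cesaro M N = (1 / real N) *\<^sub>R (\<Sum>n<N. L ** mpow M n)"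
    unfolding cesaro_def by (subst mmult_scaleR_right, subst sum_mmult_left) (rule refl)
  also have "\<dots> = L" using assms by (simp add: mpow_fix_right sum_constant_scaleR del: sum_constant)
  finally show ?thesis .
qed

lemma limpt_unique:
  fixes M :: "real^'n^'n"
  assumes "stoch M" "strict_mono r1" "(cesaro M \<circ> r1) \<longlonglongrightarrow> L1"
    "strict_mono r2" "(cesaro M \<circ> r2) \<longlonglongrightarrow> L2"
  shows "L1 = L2"
proof -
  note p1 = limpt_props[OF assms(1-3)] and p2 = limpt_props[OF assms(1,4,5)]
  have pos: "strict_mono r \<Longrightarrow> n \<ge> 1 \<Longrightarrow> 0 < r n" for r :: "nat \<Rightarrow> nat" and n :: nat
    using seq_suble[of r n] by linarith
  have "(\<lambda>n. L2 ** cesaro M (r1 n)) \<longlonglongrightarrow> L2 ** L1"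
    using assms(3) by (intro tendsto_mmult_left) (simp add: o_def)
  moreover have "(\<lambda>n. L2 ** cesaro M (r1 n)) \<longlonglongrightarrow> L2"
  proof (intro tendsto_eventually)
    have "\<forall>n\<ge>1. L2 ** cesaro M (r1 n) = L2" using p2 pos[OF assms(2)] cesaro_fix_right by blast
    then show "\<forall>\<^sub>F n in sequentially. L2 ** cesaro M (r1 n) = L2"
      unfolding eventually_sequentially by blast
  qed
  ultimately have a: "L2 ** L1 = L2" using LIMSEQ_unique by blast
  have "(\<lambda>n. cesaro M (r2 n) ** L1) \<longlonglongrightarrow> L2 ** L1"
    using assms(5) by (intro tendsto_mmult_right) (simp add: o_def)
  moreover have "(\<lambda>n. cesaro M (r2 n) ** L1) \<longlonglongrightarrow> L1"
  proof (intro tendsto_eventually)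
    have "\<forall>n\<ge>1. cesaro M (r2 n) ** L1 = L1" using p1 pos[OF assms(4)] cesaro_fix_left by blast
    then show "\<forall>\<^sub>F n in sequentially. cesaro M (r2 n) ** L1 = L1"
      unfolding eventually_sequentially by blast
  qed
  ultimately have b: "L2 ** L1 = L1" using LIMSEQ_unique by blast
  show ?thesis using a b by simp
qed




lemma bsub: fixes f :: "nat \<Rightarrow> 'a::heine_borel" assumes "bounded (range f)"
  obtains l r where "strict_mono r" "(f \<circ> r) \<longlonglongrightarrow> l"
  using bounded_imp_convergent_subsequence[OF assms] by blast

lemma cesaro_converges:
  fixes M :: "real^'n^'n"
  assumes "stoch M"
  shows "\<exists>L. cesaro M \<longlonglongrightarrow> L \<and> L ** M = L \<and> stoch L"
proof -
  obtain L r where r: "strict_mono r" "(cesaro M \<circ> r) \<longlonglongrightarrow> L"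
    using bounded_imp_convergent_subsequence[OF cesaro_bounded[OF assms]] by blast
  have "cesaro M \<longlonglongrightarrow> L"
  proof (rule ccontr)
    assume "\<not> cesaro M \<longlonglongrightarrow> L"
    then obtain e where e: "e > 0" "\<forall>N. \<exists>n\<ge>N. \<not> dist (cesaro M n) L < e"
      unfolding lim_sequentially by blast
    have "\<forall>N. \<exists>n\<ge>N. e \<le> dist (cesaro M n) L"
    proof
      fix N obtain n where "n \<ge> N" "\<not> dist (cesaro M n) L < e" using e(2) by blast
      then show "\<exists>n\<ge>N. e \<le> dist (cesaro M n) L" by (intro exI[of _ n]) simp
    qed
    then have "infinite {n. e \<le> dist (cesaro M n) L}"
      unfolding infinite_nat_iff_unbounded_le by simp
    from infinite_enumerate[OF this] obtain s :: "nat \<Rightarrow> nat" where s1: "strict_mono s"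
      and s2: "\<forall>n. s n \<in> {n. e \<le> dist (cesaro M n) L}" by metis
    have s: "strict_mono s" "\<And>n. e \<le> dist (cesaro M (s n)) L" using s1 s2 by auto
    have "bounded (range (cesaro M \<circ> s))"
    proof (rule bounded_subset[OF cesaro_bounded[OF assms]])
      show "range (cesaro M \<circ> s) \<subseteq> range (cesaro M)" by auto
    qed
    from bsub[OF this] obtain L' and t :: "nat \<Rightarrow> nat"
      where t: "strict_mono t" "((cesaro M \<circ> s) \<circ> t) \<longlonglongrightarrow> L'" .
    have "strict_mono (s \<circ> t)" using s(1) t(1) by (rule strict_mono_o)
    moreover have "(cesaro M \<circ> (s \<circ> t)) \<longlonglongrightarrow> L'" using t(2) by (simp add: o_assoc)
    ultimately have "L' = L" using limpt_unique[OF assms r] by blast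
    then have "(\<lambda>n. dist (cesaro M (s (t n))) L) \<longlonglongrightarrow> dist L L"
      using t(2) by (intro tendsto_dist) (simp_all add: o_def)
    moreover have "\<exists>N. \<forall>n\<ge>N. e \<le> dist (cesaro M (s (t n))) L" using s(2) by blast
    ultimately have "e \<le> dist L L" by (rule LIMSEQ_le_const)
    then show False using e(1) by simp
  qed
  then show ?thesis using limpt_props[OF assms r] by blast
qed




lemma repellor:
  fixes A :: "'i::finite \<Rightarrow> 'i \<Rightarrow> real"
  assumes "EUS A i0"
  shows "\<exists>\<epsilon>>0. \<forall>\<pi>\<in>simplex. 1 - \<epsilon> \<le> \<pi> i0 \<and> \<pi> i0 < 1 \<longrightarrow> replicator_rhs A \<pi> i0 < 0"
proof (cases "UNIV - {i0} = {}")
  case True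
  have "\<pi> i0 = 1" if "\<pi> \<in> simplex" for \<pi> :: "'i \<Rightarrow> real"
  proof -
    have u: "UNIV = {i0}" using True by blast
    have "sum \<pi> UNIV = 1" using that by (simp add: simplex_def)
    moreover have "sum \<pi> UNIV = sum \<pi> {i0}" by (simp only: u)
    ultimately show ?thesis by simp
  qed
  then show ?thesis by (intro exI[of _ 1]) force
next
  case False
  define Oth where "Oth = UNIV - {i0}"
  have finO: "finite Oth" and neO: "Oth \<noteq> {}" using False by (auto simp: Oth_def)
  define d where "d = Min ((\<lambda>j. A j i0 - A i0 i0) ` Oth)"
  have dpos: "d > 0"
    unfolding d_def using finO neO assms by (subst Min_gr_iff) (auto simp: EUS_def Oth_def)
  have dle: "d \<le> A j i0 - A i0 i0" if "j \<in> Oth" for j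
    unfolding d_def using finO that by (intro Min_le) auto
  define K where "K = (\<Sum>i\<in>UNIV. \<Sum>j\<in>UNIV. \<bar>A i j\<bar>)"
  have Kle: "\<bar>A i j\<bar> \<le> K" for i j
  proof -
    have "\<bar>A i j\<bar> \<le> (\<Sum>j\<in>UNIV. \<bar>A i j\<bar>)" by (rule member_le_sum) auto
    also have "\<dots> \<le> K" unfolding K_def by (rule member_le_sum) (auto intro: sum_nonneg)
    finally show ?thesis .
  qed
  have K0: "K \<ge> 0" unfolding K_def by (intro sum_nonneg) auto
  define \<epsilon> where "\<epsilon> = min (1/2) (d / (8 * K + 1))"
  have epos: "\<epsilon> > 0" using dpos K0 by (simp add: \<epsilon>_def)
  have Ke: "2 * K * \<epsilon> \<le> d / 4"
  proof -
    have "\<epsilon> \<le> d / (8 * K + 1)" by (simp add: \<epsilon>_def)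
    then have "2 * K * \<epsilon> \<le> 2 * K * (d / (8 * K + 1))" using K0 by (intro mult_left_mono) auto
    also have "\<dots> \<le> d / 4" using K0 dpos by (simp add: field_simps)
    finally show ?thesis .
  qed
  show ?thesis
  proof (intro exI[of _ \<epsilon>] conjI epos ballI impI)
    fix \<pi> :: "'i \<Rightarrow> real" assume pi: "\<pi> \<in> simplex" and h: "1 - \<epsilon> \<le> \<pi> i0 \<and> \<pi> i0 < 1"
    have nn: "\<And>i. 0 \<le> \<pi> i" and s1: "(\<Sum>i\<in>UNIV. \<pi> i) = 1" using pi by (auto simp: simplex_def)
    have split: "(\<Sum>i\<in>UNIV. f i) = f i0 + (\<Sum>i\<in>Oth. f i)" for f :: "'i \<Rightarrow> real"
      unfolding Oth_def by (rule sum.remove) auto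
    define x where "x = 1 - \<pi> i0"
    have xO: "(\<Sum>i\<in>Oth. \<pi> i) = x" using s1 split[of \<pi>] by (simp add: x_def)
    have xpos: "x > 0" and xle: "x \<le> \<epsilon>" using h by (auto simp: x_def)
    have "\<epsilon> \<le> 1/2" unfolding \<epsilon>_def by (rule min.cobounded1)
    then have pi0: "\<pi> i0 \<ge> 1/2" using h by linarith
    define D where "D i = A_vs_mix A i0 \<pi> - A_vs_mix A i \<pi>" for i
    have G: "A_vs_mix A i0 \<pi> - A_mix_mix A \<pi> = (\<Sum>i\<in>Oth. \<pi> i * D i)"
    proof -
      have "A_vs_mix A i0 \<pi> - A_mix_mix A \<pi> = (\<Sum>i\<in>UNIV. \<pi> i * D i)"
        using s1 by (simp add: A_mix_mix_def D_def algebra_simps sum_subtractf sum_distrib_right[symmetric])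
      also have "\<dots> = (\<Sum>i\<in>Oth. \<pi> i * D i)" by (simp add: split D_def)
      finally show ?thesis .
    qed
    have Dle: "D i \<le> - d / 4" if "i \<in> Oth" for i
    proof -
      have "D i = (\<Sum>j\<in>UNIV. \<pi> j * (A i0 j - A i j))"
        by (simp add: D_def A_vs_mix_def algebra_simps sum_subtractf)
      also have "\<dots> = \<pi> i0 * (A i0 i0 - A i i0) + (\<Sum>j\<in>Oth. \<pi> j * (A i0 j - A i j))"
        by (rule split)
      also have "\<dots> \<le> \<pi> i0 * (- d) + (\<Sum>j\<in>Oth. \<pi> j * (2 * K))"
      proof (rule add_mono)
        show "\<pi> i0 * (A i0 i0 - A i i0) \<le> \<pi> i0 * (- d)"
          using dle[OF that] nn[of i0] by (intro mult_left_mono) auto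
        show "(\<Sum>j\<in>Oth. \<pi> j * (A i0 j - A i j)) \<le> (\<Sum>j\<in>Oth. \<pi> j * (2 * K))"
        proof (rule sum_mono)
          fix j
          have "A i0 j - A i j \<le> 2 * K" using Kle[of i0 j] Kle[of i j] by linarith
          then show "\<pi> j * (A i0 j - A i j) \<le> \<pi> j * (2 * K)" using nn[of j] by (rule mult_left_mono)
        qed
      qed
      also have "\<dots> = - \<pi> i0 * d + x * (2 * K)"
        by (simp only: sum_distrib_right[symmetric] xO)
      also have "\<dots> \<le> - d / 4"
      proof -
        have "- \<pi> i0 * d \<le> - (1/2) * d" using pi0 dpos by (intro mult_right_mono) auto
        moreover have "x * (2 * K) \<le> \<epsilon> * (2 * K)" using xle K0 by (intro mult_right_mono) auto
        moreover have "\<epsilon> * (2 * K) = 2 * K * \<epsilon>" by simp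
        ultimately show ?thesis using Ke by linarith
      qed
      finally show ?thesis .
    qed
    have "A_vs_mix A i0 \<pi> - A_mix_mix A \<pi> \<le> (\<Sum>i\<in>Oth. \<pi> i * (- d / 4))"
      unfolding G by (intro sum_mono mult_left_mono Dle nn)
    also have "\<dots> = x * (- d / 4)" by (simp only: sum_distrib_right[symmetric] xO)
    also have "\<dots> < 0" using dpos xpos by (simp add: mult_pos_neg)
    finally have "A_vs_mix A i0 \<pi> - A_mix_mix A \<pi> < 0" .
    moreover have "\<pi> i0 > 0" using pi0 by simp
    ultimately show "replicator_rhs A \<pi> i0 < 0"
      unfolding replicator_rhs_def by (simp add: mult_pos_neg)
  qed
qed




lemma UNIV_outcome: "(UNIV :: outcome set) = {CC, CD, DC, DD}"
  using outcome.exhaust by auto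

instance outcome :: finite
  by standard (simp add: UNIV_outcome)

lemma sum_outcome: "(\<Sum>w\<in>UNIV. f w) = osum f"
  by (simp add: UNIV_outcome osum_def)

definition TM :: "(outcome \<Rightarrow> real) \<Rightarrow> (outcome \<Rightarrow> real) \<Rightarrow> real^outcome^outcome" where
  "TM p q = (\<chi> w w'. trans p q w w')"

lemma stoch_TM:
  assumes "is_mem1_vector p" "is_mem1_vector q"
  shows "stoch (TM p q)"
proof -
  have "0 \<le> trans p q w w'" for w w'
    using assms unfolding is_mem1_vector_def trans_def play_prob_def
    by (auto intro!: mult_nonneg_nonneg)
  moreover have "osum (trans p q w) = 1" for w
    by (simp add: osum_def trans_def play_prob_def algebra_simps)
  ultimately show ?thesis by (simp add: stoch_def TM_def sum_outcome)
qed

lemma dist_mpow: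
  "outcome_dist X Y n w' = mpow (TM (fst X) (fst Y)) n $ mk_outcome (snd X) (snd Y) $ w'"
proof (induction n arbitrary: w')
  case 0 then show ?case by (simp add: mat_def)
next
  case (Suc n) then show ?case
    by (simp add: matrix_matrix_mult_def sum_outcome TM_def)
qed

lemma longrun_stationary:
  assumes "is_mem1_vector (fst X)" "is_mem1_vector (fst Y)"
  shows "\<exists>l. (\<forall>w. 0 \<le> l w) \<and> osum l = 1 \<and>
     (\<forall>w'. l w' = osum (\<lambda>w. l w * trans (fst X) (fst Y) w w')) \<and>
     longrun_payoff R P X Y = osum (\<lambda>w. l w * SX R P w)"
proof -
  define M where "M = TM (fst X) (fst Y)"
  define w0 where "w0 = mk_outcome (snd X) (snd Y)"
  have st: "stoch M" using stoch_TM[OF assms] by (simp add: M_def)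
  obtain L where L: "cesaro M \<longlonglongrightarrow> L" "L ** M = L" "stoch L"
    using cesaro_converges[OF st] by blast
  define l where "l w = L $ w0 $ w" for w
  have avg: "(\<Sum>n<N. expected_payoff R P X Y n) / real N = osum (\<lambda>w. cesaro M N $ w0 $ w * SX R P w)" for N
    by (simp add: expected_payoff_def dist_mpow osum_def cesaro_entry M_def w0_def
        sum.distrib sum_distrib_right[symmetric] add_divide_distrib)
  have "(\<lambda>N. osum (\<lambda>w. cesaro M N $ w0 $ w * SX R P w)) \<longlonglongrightarrow> osum (\<lambda>w. l w * SX R P w)"
    unfolding osum_def l_def by (intro tendsto_intros L(1))
  then have "(\<lambda>N. (\<Sum>n<N. expected_payoff R P X Y n) / real N) \<longlonglongrightarrow> osum (\<lambda>w. l w * SX R P w)"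
    by (simp only: avg)
  then have lr: "longrun_payoff R P X Y = osum (\<lambda>w. l w * SX R P w)"
    unfolding longrun_payoff_def by (rule limI)
  have "l w' = osum (\<lambda>w. l w * trans (fst X) (fst Y) w w')" for w'
  proof -
    have "l w' = (L ** M) $ w0 $ w'" using L(2) by (simp add: l_def)
    also have "\<dots> = osum (\<lambda>w. l w * trans (fst X) (fst Y) w w')"
      by (simp add: matrix_matrix_mult_def sum_outcome l_def M_def TM_def)
    finally show ?thesis .
  qed
  moreover have "\<forall>w. 0 \<le> l w" "osum l = 1" using L(3)
    by (auto simp: stoch_def l_def sum_outcome[symmetric])
  ultimately show ?thesis using lr by blast
qed

lemma self_dist:
  assumes "fst X DD = 0" "snd X = False"
  shows "outcome_dist X X n w = (if w = DD then 1 else 0)"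
proof (induction n arbitrary: w)
  case 0 then show ?case using assms by (simp add: mk_outcome_def)
next
  case (Suc n) then show ?case using assms
    by (cases w) (simp_all add: osum_def trans_def play_prob_def)
qed

lemma self_payoff:
  assumes "fst X DD = 0" "snd X = False"
  shows "longrun_payoff R P X X = P"
proof -
  have e: "expected_payoff R P X X n = P" for n
    by (simp add: expected_payoff_def self_dist[OF assms] osum_def)
  have "(\<lambda>N. (\<Sum>n<N. expected_payoff R P X X n) / real N) \<longlonglongrightarrow> P"
  proof (rule tendsto_eventually)
    have "\<forall>N\<ge>1. (\<Sum>n<N. expected_payoff R P X X n) / real N = P" by (simp add: e)
    then show "\<forall>\<^sub>F N in sequentially. (\<Sum>n<N. expected_payoff R P X X n) / real N = P"
      unfolding eventually_sequentially by blast
  qed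
  then show ?thesis unfolding longrun_payoff_def by (rule limI)
qed

lemma zd_beats:
  assumes P: "0 < P" "P < R" "P < 1/2"
    and mX: "is_mem1_vector (fst X)" and mY: "is_mem1_vector (fst Y)"
    and qDD: "fst X DD \<noteq> 0" and pDD: "fst Y DD = 0"
    and dec: "PD_decomp R P (fst Y) \<alpha> \<beta> \<gamma> 0" and g: "\<gamma> > 0" and ag: "\<alpha> / \<gamma> > 0"
  shows "longrun_payoff R P X Y > P"
proof -
  define q where "q = fst X"
  define p where "p = fst Y"
  obtain l where l: "\<forall>w. 0 \<le> l w" "osum l = 1"
     "\<forall>w'. l w' = osum (\<lambda>w. l w * trans q p w w')"
     "longrun_payoff R P X Y = osum (\<lambda>w. l w * SX R P w)"
    using longrun_stationary[OF mX mY, of R P] unfolding q_def p_def by blast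
  define a where "a = l CC"
  define b where "b = l CD"
  define c where "c = l DC"
  define d where "d = l DD"
  have nn: "0 \<le> a" "0 \<le> b" "0 \<le> c" "0 \<le> d" using l(1) by (auto simp: a_def b_def c_def d_def)
  have s1: "a + b + c + d = 1" using l(2) by (simp add: osum_def a_def b_def c_def d_def)
  have D: "p w - tilde w = \<alpha> * SX R P w + \<beta> * SY R P w + \<gamma> + 0 * e23 w" for w
    using dec unfolding PD_decomp_def p_def by blast
  have pCC: "p CC - 1 = \<alpha> * R + \<beta> * R + \<gamma>" using D[of CC] by simp
  have pCD: "p CD - 1 = \<beta> + \<gamma>" using D[of CD] by simp
  have pDC: "p DC = \<alpha> + \<gamma>" using D[of DC] by simp
  have pDD': "\<alpha> * P + \<beta> * P + \<gamma> = 0" using D[of DD] pDD by (simp add: p_def)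
  have qDDpos: "q DD > 0" using qDD mX unfolding q_def is_mem1_vector_def by (metis less_eq_real_def)
  have statCC: "l CC = osum (\<lambda>w. l w * trans q p w CC)" using l(3) by blast
  have statDC: "l DC = osum (\<lambda>w. l w * trans q p w DC)" using l(3) by blast
  have statDD: "l DD = osum (\<lambda>w. l w * trans q p w DD)" using l(3) by blast
  have eq: "a + c = a * p CC + b * p DC + c * p CD + d * p DD"
  proof -
    have osplit: "osum (\<lambda>w. l w * (f w + g w)) = osum (\<lambda>w. l w * f w) + osum (\<lambda>w. l w * g w)"
      for f g :: "outcome \<Rightarrow> real" by (simp add: osum_def algebra_simps)
    have "a + c = osum (\<lambda>w. l w * (trans q p w CC + trans q p w DC))"
      unfolding a_def c_def osplit using statCC statDC by linarith
    also have "\<dots> = a * p CC + b * p DC + c * p CD + d * p DD"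
      by (simp add: osum_def trans_def play_prob_def a_def b_def c_def d_def algebra_simps)
    finally show ?thesis .
  qed
  have d1: "d < 1"
  proof (rule ccontr)
    assume "\<not> d < 1"
    then have "d = 1" "a = 0" "b = 0" "c = 0" using s1 nn by linarith+
    moreover have "d = a * trans q p CC DD + b * trans q p CD DD + c * trans q p DC DD + d * trans q p DD DD"
      using statDD by (simp add: osum_def a_def b_def c_def d_def)
    ultimately have "1 = trans q p DD DD" by simp
    then show False using qDDpos pDD by (simp add: trans_def play_prob_def p_def)
  qed
  define sX where "sX = a * R + c + d * P"
  define sY where "sY = a * R + b + d * P"
  have lr: "longrun_payoff R P X Y = sX" using l(4) by (simp add: osum_def sX_def a_def c_def d_def)
  have pDD0: "p DD = 0" using pDD by (simp add: p_def)
  have E: "\<alpha> * sY + \<beta> * sX + \<gamma> = 0"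
  proof -
    have "\<alpha> * sY + \<beta> * sX + \<gamma> =
       (a * (p CC - 1) + b * p DC + c * (p CD - 1) + d * p DD)
       + d * (\<alpha> * P + \<beta> * P + \<gamma>) + \<gamma> * (1 - (a + b + c + d))
       - a * (p CC - 1 - (\<alpha> * R + \<beta> * R + \<gamma>)) - b * (p DC - (\<alpha> + \<gamma>))
       - c * (p CD - 1 - (\<beta> + \<gamma>)) - d * p DD"
      by (simp add: sX_def sY_def algebra_simps)
    also have "\<dots> = 0" using eq pCC pCD pDC pDD' s1 pDD0 by (simp add: algebra_simps)
    finally show ?thesis .
  qed
  have apos: "\<alpha> > 0" using ag g by (simp add: zero_less_divide_iff)
  have "(\<alpha> + \<beta>) * P < 0" using pDD' g by (simp add: algebra_simps)
  then have ab: "\<alpha> + \<beta> < 0" using P(1) by (simp add: mult_less_0_iff)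
  define u where "u = sX - P"
  define v where "v = sY - P"
  have uv: "\<alpha> * v + \<beta> * u = 0" using E pDD' by (simp add: u_def v_def algebra_simps)
  have sum_pos: "u + v > 0"
  proof -
    have "u + v - (2 * a * (R - P) + (b + c) * (1 - 2 * P)) = 2 * P * (a + b + c + d - 1)"
      by (simp add: u_def v_def sX_def sY_def algebra_simps)
    then have "u + v = 2 * a * (R - P) + (b + c) * (1 - 2 * P)" using s1 by simp
    moreover have "a + b + c > 0" using d1 s1 by linarith
    moreover have "0 \<le> 2 * a * (R - P)" "0 \<le> (b + c) * (1 - 2 * P)" using nn P by auto
    moreover have "a > 0 \<Longrightarrow> 0 < 2 * a * (R - P)" using P by simp
    moreover have "b + c > 0 \<Longrightarrow> 0 < (b + c) * (1 - 2 * P)" using P by simp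
    ultimately show ?thesis
    proof (cases "a > 0")
      case True
      then show ?thesis using \<open>u + v = _\<close> \<open>a > 0 \<Longrightarrow> 0 < 2 * a * (R - P)\<close>
        \<open>0 \<le> (b + c) * (1 - 2 * P)\<close> by linarith
    next
      case False
      then have "b + c > 0" using nn \<open>a + b + c > 0\<close> by linarith
      then show ?thesis using \<open>u + v = _\<close> \<open>b + c > 0 \<Longrightarrow> 0 < (b + c) * (1 - 2 * P)\<close>
        \<open>0 \<le> 2 * a * (R - P)\<close> by linarith
    qed
  qed
  have "u > 0"
  proof (rule ccontr)
    assume "\<not> u > 0"
    then have "u \<le> 0" by simp
    moreover have "\<beta> \<le> 0" using ab apos by simp
    ultimately have "\<beta> * u \<ge> 0" by (simp add: mult_nonpos_nonpos)
    then have "\<alpha> * v \<le> 0" using uv by simp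
    then have "v \<le> 0" using apos by (simp add: mult_le_0_iff)
    then show False using sum_pos \<open>u \<le> 0\<close> by simp
  qed
  then show ?thesis using lr by (simp add: u_def)
qed

theorem theorem4p10:
  fixes R P :: real and s :: "'i::finite \<Rightarrow> strategy" and istar :: 'i
  assumes "0 < P" "P < R" "R < 1" "2 * R > 1" "P < 1/2"
    and "\<And>i. is_mem1_vector (fst (s i))"
    and "extortionate R P (fst (s istar))" and "snd (s istar) = False"
    and "\<And>j. j \<noteq> istar \<Longrightarrow> \<not> firm (fst (s j))"
  shows "EUS (payA R P s) istar \<and>
         (\<exists>\<epsilon>>0. \<forall>\<pi>\<in>simplex. 1 - \<epsilon> \<le> \<pi> istar \<and> \<pi> istar < 1
              \<longrightarrow> replicator_rhs (payA R P s) \<pi> istar < 0)"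
proof -
  from assms(7) obtain \<alpha> \<beta> \<gamma> where dec: "PD_decomp R P (fst (s istar)) \<alpha> \<beta> \<gamma> 0"
    and g: "\<gamma> > 0" and ag: "\<alpha> / \<gamma> > 0" and fi: "fst (s istar) DD = 0"
    unfolding extortionate_def firm_def by blast
  have self: "payA R P s istar istar = P"
    unfolding payA_def using fi assms(8) by (rule self_payoff)
  have eus: "EUS (payA R P s) istar"
    unfolding EUS_def
  proof (intro allI impI)
    fix j assume "j \<noteq> istar"
    then have q: "fst (s j) DD \<noteq> 0" using assms(9) by (simp add: firm_def)
    have "longrun_payoff R P (s j) (s istar) > P"
      by (rule zd_beats[OF assms(1,2,5) assms(6) assms(6) q fi dec g ag])
    then show "payA R P s j istar > payA R P s istar istar"
      using self by (simp add: payA_def)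
  qed
  show ?thesis using eus repellor[OF eus] by blast
qed


end
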